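(* Let $p,q\in\mathbb{H}^2$ with $\mathbb{H}^2=p\mathbb{H}\oplus q\mathbb{H}$, let $S$ be the round two-sphere $\{[px+q]:x\in\mathbb{C}\}\cup\{[p]\}\cong\mathbb{C}\cup\{\infty\}$, so that the circle through $[p],[q],[r]$, $r=p+q$, is $\{[px+q]:x\in\mathbb{R}\}\cup\{[p]\}$. Let $C_r=\mathbb{P}(\mathrm{span}\{p\wedge pj,q\wedge qj,r\wedge rj\})\cap Q^4$. Then every point of $C_r$ corresponds either to a point of this circle (including $\infty=[p]$), or to a two-sphere in $\mathbb{HP}^1$ which half-touches $S$ (in these coordinates) at a pair of points $z,\bar z$ of $\mathbb{C}$, i.e. at $[pz+q]$ and $[p\bar z+q]$.
   Context: $\mathbb{H}$ denotes the quaternions, $\mathbb{C}=\mathrm{span}_{\mathbb{R}}\{1,i\}$, $zj=j\bar z$ for $z\in\mathbb{C}$; $\mathbb{H}^2$ is a right $\mathbb{H}$-vector space identified with $\mathbb{C}^4$; $\mathbb{HP}^1=\{v\mathbb{H}\}\cong S^4$; $\mathbb{CP}^3=\mathbb{P}(\mathbb{C}^4)$; the twistor fibre over $v\mathbb{H}$ is the line through $[v],[vj]$. $Q^4=\{[\alpha]\in\mathbb{P}(\Lambda^2\mathbb{C}^4):\alpha\wedge\alpha=0\}$, $[v\wedge w]$ identified with the line through $[v],[w]$. The antilinear extension of $v\wedge w\mapsto vj\wedge wj$ gives a real structure $j$ on $Q^4$ whose real points $[v\wedge vj]$ are identified with points $v\mathbb{H}$ of $S^4$; a non-real point is the twistor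 lift of a round two-sphere with conformal structure (its image under $v\mathbb{C}\mapsto v\mathbb{H}$). The twistor lift of $S$ (with the conformal structure in which $x\in\mathbb{C}$ is a holomorphic coordinate) is the line through $[p],[q]$. A null line is a projective line contained in $Q^4$; two distinct two-spheres half-touch if they span a null line containing no real point; they then meet in exactly two points of $S^4$, at which they are said to half-touch. *)

theory Defs
  imports "HOL-Analysis.Analysis"
begin

text \<open>A quaternion is written a + j b with a, b complex, so that right
multiplication by a complex number z is (a,b) -> (a z, b z) (complex linear).
H^2 is thus identified with C^4 via (a1 + j b1, a2 + j b2) -> (a1,b1,a2,b2),
right multiplication by complex scalars is the usual complex scalar
multiplication, and right multiplication by j is the antilinear map
(a1,b1,a2,b2) -> (-cnj b1, cnj a1, -cnj b2, cnj a2).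
Bivectors in Lambda^2 C^4 are represented as antisymmetric 4x4 complex
matrices, v wedge w = v w^T - w v^T.\<close>

type_synonym cvec = "complex ^ 4"
type_synonym bivec = "complex ^ 4 ^ 4"

definition jperm :: "4 \<Rightarrow> 4" where
  "jperm i = (if i = 1 then 2 else if i = 2 then 1 else if i = 3 then 4 else 3)"

definition jsgn :: "4 \<Rightarrow> complex" where
  "jsgn i = (if i = 1 \<or> i = 3 then -1 else 1)"

definition jv :: "cvec \<Rightarrow> cvec" where
  "jv v = (\<chi> i. jsgn i * cnj (v $ jperm i))"

text \<open>the quaternionic line vH, as a subset of C^4 (= C-span of v and vj)\<close>
definition hline :: "cvec \<Rightarrow> cvec set" where
  "hline v = {a *s v + b *s jv v | a b. True}"

definition wedge :: "cvec \<Rightarrow> cvec \<Rightarrow> bivec" where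
  "wedge v w = (\<chi> i k. v $ i * w $ k - w $ i * v $ k)"

definition bsc :: "complex \<Rightarrow> bivec \<Rightarrow> bivec" where
  "bsc c A = (\<chi> i k. c * A $ i $ k)"

text \<open>alpha wedge alpha = 0 (Pfaffian), i.e. the Klein quadric condition\<close>
definition pf :: "bivec \<Rightarrow> complex" where
  "pf A = A $ 1 $ 2 * A $ 3 $ 4 - A $ 1 $ 3 * A $ 2 $ 4 + A $ 1 $ 4 * A $ 2 $ 3"

definition inQ :: "bivec \<Rightarrow> bool" where
  "inQ A \<longleftrightarrow> A \<noteq> 0 \<and> pf A = 0"

text \<open>the antilinear real structure: extension of v wedge w -> vj wedge wj\<close>
definition Jb :: "bivec \<Rightarrow> bivec" where
  "Jb A = (\<chi> i k. jsgn i * jsgn k * cnj (A $ jperm i $ jperm k))"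

definition realpt :: "bivec \<Rightarrow> bool" where
  "realpt A \<longleftrightarrow> A \<noteq> 0 \<and> (\<exists>c. Jb A = bsc c A)"

definition distinct_pts :: "bivec \<Rightarrow> bivec \<Rightarrow> bool" where
  "distinct_pts A B \<longleftrightarrow> A \<noteq> 0 \<and> B \<noteq> 0 \<and> (\<forall>c. A \<noteq> bsc c B)"

definition null_line :: "bivec \<Rightarrow> bivec \<Rightarrow> bool" where
  "null_line A B \<longleftrightarrow> (\<forall>a b. pf (bsc a A + bsc b B) = 0)"

definition half_touch :: "bivec \<Rightarrow> bivec \<Rightarrow> bool" where
  "half_touch A B \<longleftrightarrow> inQ A \<and> inQ B \<and> \<not> realpt A \<and> \<not> realpt B \<and>
     distinct_pts A B \<and> null_line A B \<and>
     (\<forall>a b. bsc a A + bsc b B \<noteq> 0 \<longrightarrow> \<not> realpt (bsc a A + bsc b B))"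

text \<open>the subset of HP^1 = S^4 (points given as quaternionic lines) that is the
image of the projective line in CP^3 corresponding to [A] in Q^4\<close>
definition sph :: "bivec \<Rightarrow> cvec set set" where
  "sph A = {hline v | v. v \<noteq> 0 \<and> (\<exists>w. A = wedge v w)}"

end

theory Submission
  imports Defs
begin


lemma vec4_eq: "(x::'a^4) = y \<longleftrightarrow> x$1 = y$1 \<and> x$2 = y$2 \<and> x$3 = y$3 \<and> x$4 = y$4"
  unfolding vec_eq_iff forall_4 ..
lemma jp: "jperm 1 = 2" "jperm 2 = 1" "jperm 3 = 4" "jperm 4 = 3" by (simp_all add: jperm_def)
lemma js: "jsgn 1 = -1" "jsgn 2 = 1" "jsgn 3 = -1" "jsgn 4 = 1" by (simp_all add: jsgn_def)

definition B :: "bivec \<Rightarrow> bivec \<Rightarrow> complex" where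
  "B X Y = X$1$2*Y$3$4 + X$3$4*Y$1$2 - X$1$3*Y$2$4 - X$2$4*Y$1$3 + X$1$4*Y$2$3 + X$2$3*Y$1$4"

definition D :: "cvec \<Rightarrow> cvec \<Rightarrow> cvec \<Rightarrow> cvec \<Rightarrow> complex" where
  "D a b c d = B (wedge a b) (wedge c d)"

lemma pf_add: "pf (X + Y) = pf X + pf Y + B X Y"
  by (simp add: pf_def B_def algebra_simps)
lemma pf_bsc: "pf (bsc c X) = c^2 * pf X"
  by (simp add: pf_def bsc_def algebra_simps power2_eq_square)
lemma pf_wedge: "pf (wedge v w) = 0"
  by (simp add: pf_def wedge_def algebra_simps)
lemma B_add1: "B (X + Y) Z = B X Z + B Y Z" by (simp add: B_def algebra_simps)
lemma B_add2: "B Z (X + Y) = B Z X + B Z Y" by (simp add: B_def algebra_simps)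
lemma B_bsc1: "B (bsc c X) Z = c * B X Z" by (simp add: B_def bsc_def algebra_simps)
lemma B_bsc2: "B Z (bsc c X) = c * B Z X" by (simp add: B_def bsc_def algebra_simps)
lemma B_sym: "B X Y = B Y X" by (simp add: B_def algebra_simps)
lemma B_self: "B X X = 2 * pf X" by (simp add: B_def pf_def algebra_simps)
lemma B_neg1: "B (- X) Z = - B X Z" by (simp add: B_def algebra_simps)
lemma B_0: "B 0 Z = 0" by (simp add: B_def)

lemma wedge_add1: "wedge (x + y) z = wedge x z + wedge y z"
  by (simp add: vec_eq_iff wedge_def algebra_simps)
lemma wedge_add2: "wedge z (x + y) = wedge z x + wedge z y"
  by (simp add: vec_eq_iff wedge_def algebra_simps)
lemma wedge_sc1: "wedge (c *s x) y = bsc c (wedge x y)"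
  by (simp add: vec_eq_iff wedge_def bsc_def algebra_simps)
lemma wedge_sc2: "wedge y (c *s x) = bsc c (wedge y x)"
  by (simp add: vec_eq_iff wedge_def bsc_def algebra_simps)
lemma wedge_anti: "wedge y x = - wedge x y"
  by (simp add: vec_eq_iff wedge_def algebra_simps)
lemma wedge_self: "wedge x x = 0"
  by (simp add: vec_eq_iff wedge_def algebra_simps)
lemma wedge_0: "wedge 0 x = 0" "wedge x 0 = 0"
  by (simp_all add: vec_eq_iff wedge_def)

lemma bsc_add: "bsc c (X + Y) = bsc c X + bsc c Y" by (simp add: vec_eq_iff bsc_def algebra_simps)
lemma bsc_bsc: "bsc c (bsc d X) = bsc (c*d) X" by (simp add: vec_eq_iff bsc_def algebra_simps)
lemma bsc_1: "bsc 1 X = X" by (simp add: vec_eq_iff bsc_def)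
lemma bsc_0: "bsc 0 X = 0" "bsc c 0 = 0" by (simp_all add: vec_eq_iff bsc_def)
lemma bsc_neg: "bsc c (- X) = bsc (-c) X" by (simp add: vec_eq_iff bsc_def)

lemma D_add1: "D (x+y) b c d = D x b c d + D y b c d" by (simp add: D_def wedge_add1 B_add1)
lemma D_add2: "D a (x+y) c d = D a x c d + D a y c d" by (simp add: D_def wedge_add2 B_add1)
lemma D_add3: "D a b (x+y) d = D a b x d + D a b y d" by (simp add: D_def wedge_add1 B_add2)
lemma D_add4: "D a b c (x+y) = D a b c x + D a b c y" by (simp add: D_def wedge_add2 B_add2)
lemma D_sc1: "D (k *s x) b c d = k * D x b c d" by (simp add: D_def wedge_sc1 B_bsc1)
lemma D_sc2: "D a (k *s x) c d = k * D a x c d" by (simp add: D_def wedge_sc2 B_bsc1)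
lemma D_sc3: "D a b (k *s x) d = k * D a b x d" by (simp add: D_def wedge_sc1 B_bsc2)
lemma D_sc4: "D a b c (k *s x) = k * D a b c x" by (simp add: D_def wedge_sc2 B_bsc2)

lemma D_sw12: "D b a c d = - D a b c d" by (simp add: D_def B_def wedge_def algebra_simps)
lemma D_sw23: "D a c b d = - D a b c d" by (simp add: D_def B_def wedge_def algebra_simps)
lemma D_sw34: "D a b d c = - D a b c d" by (simp add: D_def B_def wedge_def algebra_simps)
lemma D_alt: "D x x c d = 0" "D x b x d = 0" "D x b c x = 0" "D a x x d = 0" "D a x c x = 0" "D a b x x = 0"
  by (simp_all add: D_def B_def wedge_def algebra_simps)

lemma jv_add: "jv (x + y) = jv x + jv y" by (simp add: vec_eq_iff jv_def algebra_simps)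
lemma jv_sc: "jv (c *s x) = cnj c *s jv x" by (simp add: vec_eq_iff jv_def algebra_simps)
lemma jv_jv: "jv (jv x) = - x"
  unfolding vec4_eq jv_def by (simp add: jp js)
lemma jv_0: "jv 0 = 0" by (simp add: vec_eq_iff jv_def)

lemma Jb_add: "Jb (X + Y) = Jb X + Jb Y" by (simp add: vec_eq_iff Jb_def algebra_simps)
lemma Jb_bsc: "Jb (bsc c X) = bsc (cnj c) (Jb X)" by (simp add: vec_eq_iff Jb_def bsc_def algebra_simps)
lemma Jb_wedge: "Jb (wedge v w) = wedge (jv v) (jv w)" by (simp add: vec_eq_iff Jb_def wedge_def jv_def algebra_simps)



definition om :: "cvec \<Rightarrow> cvec \<Rightarrow> complex" where "om p q = D p (jv p) q (jv q)"
definition co :: "cvec \<Rightarrow> cvec \<Rightarrow> complex \<Rightarrow> complex \<Rightarrow> complex \<Rightarrow> complex \<Rightarrow> cvec" where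
  "co p q x1 x2 x3 x4 = x1 *s p + x2 *s jv p + x3 *s q + x4 *s jv q"

definition det4 :: "complex \<Rightarrow> complex \<Rightarrow> complex \<Rightarrow> complex \<Rightarrow> complex \<Rightarrow> complex \<Rightarrow> complex \<Rightarrow> complex \<Rightarrow> complex \<Rightarrow> complex \<Rightarrow> complex \<Rightarrow> complex \<Rightarrow> complex \<Rightarrow> complex \<Rightarrow> complex \<Rightarrow> complex \<Rightarrow> complex" where
  "det4 a1 a2 a3 a4 b1 b2 b3 b4 c1 c2 c3 c4 d1 d2 d3 d4 = a1*b2*c3*d4 - a1*b2*c4*d3 - a1*b3*c2*d4 + a1*b3*c4*d2 + a1*b4*c2*d3 - a1*b4*c3*d2 - a2*b1*c3*d4 + a2*b1*c4*d3 + a2*b3*c1*d4 - a2*b3*c4*d1 - a2*b4*c1*d3 + a2*b4*c3*d1 + a3*b1*c2*d4 - a3*b1*c4*d2 - a3*b2*c1*d4 + a3*b2*c4*d1 + a3*b4*c1*d2 - a3*b4*c2*d1 - a4*b1*c2*d3 + a4*b1*c3*d2 + a4*b2*c1*d3 - a4*b2*c3*d1 - a4*b3*c1*d2 + a4*b3*c2*d1"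

context fixes p q :: cvec begin
lemma Dt0: "D p (jv p) q (jv q) = om p q" by (simp add: om_def)
lemma Dt1: "D p (jv p) (jv q) q = - om p q" unfolding om_def D_def B_def wedge_def by (simp add: algebra_simps)
lemma Dt2: "D p q (jv p) (jv q) = - om p q" unfolding om_def D_def B_def wedge_def by (simp add: algebra_simps)
lemma Dt3: "D p q (jv q) (jv p) = om p q" unfolding om_def D_def B_def wedge_def by (simp add: algebra_simps)
lemma Dt4: "D p (jv q) (jv p) q = om p q" unfolding om_def D_def B_def wedge_def by (simp add: algebra_simps)
lemma Dt5: "D p (jv q) q (jv p) = - om p q" unfolding om_def D_def B_def wedge_def by (simp add: algebra_simps)
lemma Dt6: "D (jv p) p q (jv q) = - om p q" unfolding om_def D_def B_def wedge_def by (simp add: algebra_simps)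
lemma Dt7: "D (jv p) p (jv q) q = om p q" unfolding om_def D_def B_def wedge_def by (simp add: algebra_simps)
lemma Dt8: "D (jv p) q p (jv q) = om p q" unfolding om_def D_def B_def wedge_def by (simp add: algebra_simps)
lemma Dt9: "D (jv p) q (jv q) p = - om p q" unfolding om_def D_def B_def wedge_def by (simp add: algebra_simps)
lemma Dt10: "D (jv p) (jv q) p q = - om p q" unfolding om_def D_def B_def wedge_def by (simp add: algebra_simps)
lemma Dt11: "D (jv p) (jv q) q p = om p q" unfolding om_def D_def B_def wedge_def by (simp add: algebra_simps)
lemma Dt12: "D q p (jv p) (jv q) = om p q" unfolding om_def D_def B_def wedge_def by (simp add: algebra_simps)
lemma Dt13: "D q p (jv q) (jv p) = - om p q" unfolding om_def D_def B_def wedge_def by (simp add: algebra_simps)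
lemma Dt14: "D q (jv p) p (jv q) = - om p q" unfolding om_def D_def B_def wedge_def by (simp add: algebra_simps)
lemma Dt15: "D q (jv p) (jv q) p = om p q" unfolding om_def D_def B_def wedge_def by (simp add: algebra_simps)
lemma Dt16: "D q (jv q) p (jv p) = om p q" unfolding om_def D_def B_def wedge_def by (simp add: algebra_simps)
lemma Dt17: "D q (jv q) (jv p) p = - om p q" unfolding om_def D_def B_def wedge_def by (simp add: algebra_simps)
lemma Dt18: "D (jv q) p (jv p) q = - om p q" unfolding om_def D_def B_def wedge_def by (simp add: algebra_simps)
lemma Dt19: "D (jv q) p q (jv p) = om p q" unfolding om_def D_def B_def wedge_def by (simp add: algebra_simps)
lemma Dt20: "D (jv q) (jv p) p q = om p q" unfolding om_def D_def B_def wedge_def by (simp add: algebra_simps)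
lemma Dt21: "D (jv q) (jv p) q p = - om p q" unfolding om_def D_def B_def wedge_def by (simp add: algebra_simps)
lemma Dt22: "D (jv q) q p (jv p) = - om p q" unfolding om_def D_def B_def wedge_def by (simp add: algebra_simps)
lemma Dt23: "D (jv q) q (jv p) p = om p q" unfolding om_def D_def B_def wedge_def by (simp add: algebra_simps)

lemma D_co: "D (co p q a1 a2 a3 a4) (co p q b1 b2 b3 b4) (co p q c1 c2 c3 c4) (co p q d1 d2 d3 d4)
   = om p q * det4 a1 a2 a3 a4 b1 b2 b3 b4 c1 c2 c3 c4 d1 d2 d3 d4"
  unfolding co_def det4_def
  apply (simp only: D_add1 D_add2 D_add3 D_add4 D_sc1 D_sc2 D_sc3 D_sc4 D_alt Dt1 Dt2 Dt3 Dt4 Dt5 Dt6 Dt7 Dt8 Dt9 Dt10 Dt11 Dt12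
    Dt13 Dt14 Dt15 Dt16 Dt17 Dt18 Dt19 Dt20 Dt21 Dt22 Dt23 Dt0)
  apply (simp add: algebra_simps)
  done

end


lemma co_add: "co p q x1 x2 x3 x4 + co p q y1 y2 y3 y4 = co p q (x1+y1) (x2+y2) (x3+y3) (x4+y4)"
  by (simp add: co_def vec_eq_iff algebra_simps)
lemma co_sc: "k *s co p q x1 x2 x3 x4 = co p q (k*x1) (k*x2) (k*x3) (k*x4)"
  by (simp add: co_def vec_eq_iff algebra_simps)
lemma co_neg: "- co p q x1 x2 x3 x4 = co p q (-x1) (-x2) (-x3) (-x4)"
  by (simp add: co_def vec_eq_iff algebra_simps)
lemma jv_co: "jv (co p q x1 x2 x3 x4) = co p q (-cnj x2) (cnj x1) (-cnj x4) (cnj x3)"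
  unfolding co_def vec4_eq jv_def by (simp add: jp js algebra_simps)
lemma co_simps: "co p q 1 0 0 0 = p" "co p q 0 1 0 0 = jv p" "co p q 0 0 1 0 = q" "co p q 0 0 0 1 = jv q"
  by (simp_all add: co_def vec_eq_iff)

lemma om_nz:
  assumes "\<And>u. \<exists>x1 x2 x3 x4. u = co p q x1 x2 x3 x4"
  shows "om p q \<noteq> 0"
proof
  assume z: "om p q = 0"
  obtain a1 a2 a3 a4 where a: "axis 1 (1::complex) = co p q a1 a2 a3 a4" using assms by blast
  obtain b1 b2 b3 b4 where b: "axis 2 (1::complex) = co p q b1 b2 b3 b4" using assms by blast
  obtain c1 c2 c3 c4 where c: "axis 3 (1::complex) = co p q c1 c2 c3 c4" using assms by blast
  obtain d1 d2 d3 d4 where d: "axis 4 (1::complex) = co p q d1 d2 d3 d4" using assms by blast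
  have "D (axis 1 (1::complex)) (axis 2 1) (axis 3 1) (axis 4 1) = 1"
    by (simp add: D_def B_def wedge_def axis_def)
  then show False unfolding a b c d D_co z by simp
qed

lemma co_inj:
  assumes "om p q \<noteq> 0" "co p q x1 x2 x3 x4 = co p q y1 y2 y3 y4"
  shows "x1 = y1 \<and> x2 = y2 \<and> x3 = y3 \<and> x4 = y4"
proof -
  have "D (co p q x1 x2 x3 x4) (co p q 0 1 0 0) (co p q 0 0 1 0) (co p q 0 0 0 1) =
        D (co p q y1 y2 y3 y4) (co p q 0 1 0 0) (co p q 0 0 1 0) (co p q 0 0 0 1)"
       "D (co p q 1 0 0 0) (co p q x1 x2 x3 x4) (co p q 0 0 1 0) (co p q 0 0 0 1) =
        D (co p q 1 0 0 0) (co p q y1 y2 y3 y4) (co p q 0 0 1 0) (co p q 0 0 0 1)"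
       "D (co p q 1 0 0 0) (co p q 0 1 0 0) (co p q x1 x2 x3 x4) (co p q 0 0 0 1) =
        D (co p q 1 0 0 0) (co p q 0 1 0 0) (co p q y1 y2 y3 y4) (co p q 0 0 0 1)"
       "D (co p q 1 0 0 0) (co p q 0 1 0 0) (co p q 0 0 1 0) (co p q x1 x2 x3 x4) =
        D (co p q 1 0 0 0) (co p q 0 1 0 0) (co p q 0 0 1 0) (co p q y1 y2 y3 y4)"
    using assms(2) by simp_all
  then show ?thesis unfolding D_co det4_def using assms(1) by simp
qed



lemma pf3: "pf (bsc a X + bsc b Y + bsc c Z) = a^2 * pf X + b^2 * pf Y + c^2 * pf Z + a*b*B X Y + a*c*B X Z + b*c*B Y Z"
  by (simp add: pf_add pf_bsc B_add1 B_add2 B_bsc1 B_bsc2 algebra_simps)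

lemma hline_sc: assumes "k \<noteq> 0" shows "hline (k *s v) = hline v"
proof (rule set_eqI)
  fix x
  have "(\<exists>a b. x = a *s (k *s v) + b *s jv (k *s v)) \<longleftrightarrow> (\<exists>a b. x = a *s v + b *s jv v)"
  proof
    assume "\<exists>a b. x = a *s (k *s v) + b *s jv (k *s v)"
    then obtain a b where "x = a *s (k *s v) + b *s jv (k *s v)" by blast
    then show "\<exists>a b. x = a *s v + b *s jv v"
      by (intro exI[of _ "a*k"] exI[of _ "b * cnj k"]) (simp add: jv_sc vector_smult_assoc)
  next
    assume "\<exists>a b. x = a *s v + b *s jv v"
    then obtain a b where "x = a *s v + b *s jv v" by blast
    then show "\<exists>a b. x = a *s (k *s v) + b *s jv (k *s v)" using assms
      by (intro exI[of _ "a/k"] exI[of _ "b / cnj k"]) (simp add: jv_sc vector_smult_assoc)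
  qed
  then show "x \<in> hline (k *s v) \<longleftrightarrow> x \<in> hline v" unfolding hline_def by blast
qed

lemma hline_jv: "hline (jv v) = hline v"
proof (rule set_eqI)
  fix x
  have "(\<exists>a b. x = a *s jv v + b *s jv (jv v)) \<longleftrightarrow> (\<exists>a b. x = a *s v + b *s jv v)"
  proof
    assume "\<exists>a b. x = a *s jv v + b *s jv (jv v)"
    then obtain a b where "x = a *s jv v + b *s jv (jv v)" by blast
    then show "\<exists>a b. x = a *s v + b *s jv v"
      by (intro exI[of _ "-b"] exI[of _ a]) (simp add: jv_jv vec_eq_iff)
  next
    assume "\<exists>a b. x = a *s v + b *s jv v"
    then obtain a b where "x = a *s v + b *s jv v" by blast
    then show "\<exists>a b. x = a *s jv v + b *s jv (jv v)"
      by (intro exI[of _ "b"] exI[of _ "-a"]) (simp add: jv_jv vec_eq_iff)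
  qed
  then show "x \<in> hline (jv v) \<longleftrightarrow> x \<in> hline v" unfolding hline_def by blast
qed

lemma wedge_tt: "wedge (t *s P1 + Q1) (t *s J1 + J2) = bsc (t*t) (wedge P1 J1) + bsc t (wedge P1 J2) + bsc t (wedge Q1 J1) + wedge Q1 J2"
  by (simp add: vec_eq_iff wedge_def bsc_def algebra_simps)
lemma wedge_11: "wedge (P1 + Q1) (J1 + J2) = wedge P1 J1 + wedge P1 J2 + wedge Q1 J1 + wedge Q1 J2"
  by (simp add: vec_eq_iff wedge_def bsc_def algebra_simps)



lemma minors:
  assumes om: "om p q \<noteq> 0"
    and eq: "bsc k (wedge (co p q a1 a2 a3 a4) (co p q b1 b2 b3 b4)) = wedge (co p q x1 x2 x3 x4) (co p q y1 y2 y3 y4)"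
  shows "k*(a1*b2 - a2*b1) = x1*y2 - x2*y1" "k*(a1*b3 - a3*b1) = x1*y3 - x3*y1"
        "k*(a1*b4 - a4*b1) = x1*y4 - x4*y1" "k*(a2*b3 - a3*b2) = x2*y3 - x3*y2"
        "k*(a2*b4 - a4*b2) = x2*y4 - x4*y2" "k*(a3*b4 - a4*b3) = x3*y4 - x4*y3"
proof -
  have h: "B (bsc k (wedge (co p q a1 a2 a3 a4) (co p q b1 b2 b3 b4))) (wedge (co p q c1 c2 c3 c4) (co p q d1 d2 d3 d4))
     = B (wedge (co p q x1 x2 x3 x4) (co p q y1 y2 y3 y4)) (wedge (co p q c1 c2 c3 c4) (co p q d1 d2 d3 d4))"
    for c1 c2 c3 c4 d1 d2 d3 d4 using eq by simp
  have "om p q * (k*(a1*b2 - a2*b1)) = om p q * (x1*y2 - x2*y1)" using h[of 0 0 1 0 0 0 0 1, unfolded B_bsc1 D_def[symmetric] D_co det4_def] by (simp add: algebra_simps)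
  then show "k*(a1*b2 - a2*b1) = x1*y2 - x2*y1" using om by simp
  have "om p q * (k*(a1*b3 - a3*b1)) = om p q * (x1*y3 - x3*y1)" using h[of 0 1 0 0 0 0 0 1, unfolded B_bsc1 D_def[symmetric] D_co det4_def] by (simp add: algebra_simps)
  then show "k*(a1*b3 - a3*b1) = x1*y3 - x3*y1" using om by simp
  have "om p q * (k*(a1*b4 - a4*b1)) = om p q * (x1*y4 - x4*y1)" using h[of 0 1 0 0 0 0 1 0, unfolded B_bsc1 D_def[symmetric] D_co det4_def] by (simp add: algebra_simps)
  then show "k*(a1*b4 - a4*b1) = x1*y4 - x4*y1" using om by simp
  have "om p q * (k*(a2*b3 - a3*b2)) = om p q * (x2*y3 - x3*y2)" using h[of 1 0 0 0 0 0 0 1, unfolded B_bsc1 D_def[symmetric] D_co det4_def] by (simp add: algebra_simps)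
  then show "k*(a2*b3 - a3*b2) = x2*y3 - x3*y2" using om by simp
  have "om p q * (k*(a2*b4 - a4*b2)) = om p q * (x2*y4 - x4*y2)" using h[of 1 0 0 0 0 0 1 0, unfolded B_bsc1 D_def[symmetric] D_co det4_def] by (simp add: algebra_simps)
  then show "k*(a2*b4 - a4*b2) = x2*y4 - x4*y2" using om by simp
  have "om p q * (k*(a3*b4 - a4*b3)) = om p q * (x3*y4 - x4*y3)" using h[of 1 0 0 0 0 1 0 0, unfolded B_bsc1 D_def[symmetric] D_co det4_def] by (simp add: algebra_simps)
  then show "k*(a3*b4 - a4*b3) = x3*y4 - x4*y3" using om by simp
qed


lemma co_zero: "co p q 0 0 0 0 = 0" by (simp add: co_def)

lemma case_nonreal:
  assumes om: "om p q \<noteq> 0" and span: "\<And>u. \<exists>x1 x2 x3 x4. u = co p q x1 x2 x3 x4"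
    and A: "A = bsc \<beta> (wedge (co p q t 0 1 0) (co p q 0 t 0 1))" and Anz: "A \<noteq> 0" and Im: "Im t \<noteq> 0"
  shows "half_touch A (wedge p q) \<and> sph A \<inter> sph (wedge p q) = {hline (t *s p + q), hline (cnj t *s p + q)}"
proof -
  define W where "W = wedge (co p q t 0 1 0) (co p q 0 t 0 1)"
  define PQ where "PQ = wedge (co p q 1 0 0 0) (co p q 0 0 1 0)"
  define E where "E = wedge (co p q 1 0 0 0) (co p q 0 1 0 0)"
  have AW: "A = bsc \<beta> W" using A W_def by simp
  have PQe: "wedge p q = PQ" unfolding PQ_def co_simps ..
  have bnz: "\<beta> \<noteq> 0" using Anz A by (auto simp: bsc_0)
  have Wnz: "W \<noteq> 0" using Anz AW by (auto simp: bsc_0)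
  have tnz: "t \<noteq> 0" using Im by auto
  have tc: "t - cnj t \<noteq> 0" using Im by (simp add: complex_eq_iff)
  have JW: "Jb W = wedge (co p q 0 (cnj t) 0 1) (co p q (- cnj t) 0 (-1) 0)" unfolding W_def Jb_wedge jv_co by simp
  have JPQ: "Jb PQ = wedge (co p q 0 1 0 0) (co p q 0 0 0 1)" unfolding PQ_def Jb_wedge jv_co by simp
  have K1: "B W PQ = 0" unfolding W_def PQ_def D_def[symmetric] D_co det4_def by simp
  have K2: "B W E = om p q" unfolding W_def E_def D_def[symmetric] D_co det4_def by simp
  have K3: "B (Jb W) W = om p q * (t - cnj t)^2" unfolding JW unfolding W_def D_def[symmetric] D_co det4_def
    by (simp add: algebra_simps power2_eq_square)
  have K4: "B (Jb PQ) PQ = - om p q" unfolding JPQ unfolding PQ_def D_def[symmetric] D_co det4_def by simp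
  have K5: "B (Jb W) PQ = 0" unfolding JW unfolding PQ_def D_def[symmetric] D_co det4_def by simp
  have K6: "B PQ PQ = 0" "B PQ E = 0" unfolding PQ_def E_def D_def[symmetric] D_co det4_def by simp_all
  have BWW: "B W W = 0" unfolding B_self W_def pf_wedge by simp
  have PQnz: "PQ \<noteq> 0" using K4 om by (auto simp: B_def)
  have noreal: "\<not> realpt (bsc a' A + bsc b' PQ)" if nz: "bsc a' A + bsc b' PQ \<noteq> 0" for a' b'
  proof
    assume "realpt (bsc a' A + bsc b' PQ)"
    then obtain d where J: "Jb (bsc a' A + bsc b' PQ) = bsc d (bsc a' A + bsc b' PQ)" unfolding realpt_def by blast
    have JY: "Jb (bsc a' A + bsc b' PQ) = bsc (cnj a' * cnj \<beta>) (Jb W) + bsc (cnj b') (Jb PQ)"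
      unfolding AW Jb_add Jb_bsc bsc_bsc by simp
    have "B (Jb (bsc a' A + bsc b' PQ)) PQ = B (bsc d (bsc a' A + bsc b' PQ)) PQ" using J by simp
    then have "cnj b' * om p q = 0"
      unfolding JY unfolding AW B_add1 B_bsc1 bsc_bsc K1 K4 K5 K6 by simp
    then have b0: "b' = 0" using om by simp
    have "B (Jb (bsc a' A + bsc b' PQ)) W = B (bsc d (bsc a' A + bsc b' PQ)) W" using J by simp
    then have "cnj a' * cnj \<beta> * (om p q * (t - cnj t)^2) = 0"
      unfolding JY unfolding AW B_add1 B_bsc1 bsc_bsc K3 BWW b0 by simp
    then have "a' = 0" using om bnz tc by simp
    then show False using nz b0 by (simp add: bsc_0)
  qed
  have pfW: "pf W = 0" unfolding W_def pf_wedge ..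
  have pfA: "pf A = 0" unfolding AW pf_bsc pfW by simp
  have ht: "half_touch A (wedge p q)"
    unfolding half_touch_def PQe
  proof (intro conjI allI impI)
    show "inQ A" using Anz pfA by (simp add: inQ_def)
    show "inQ PQ" using PQnz by (simp add: inQ_def PQ_def pf_wedge)
    show "\<not> realpt A" using noreal[of 1 0] Anz by (simp add: bsc_1 bsc_0)
    show "\<not> realpt PQ" using noreal[of 0 1] PQnz by (simp add: bsc_1 bsc_0)
    show "distinct_pts A PQ" unfolding distinct_pts_def
    proof (intro conjI allI Anz PQnz)
      fix c' show "A \<noteq> bsc c' PQ"
      proof
        assume "A = bsc c' PQ"
        then have "B A E = B (bsc c' PQ) E" by simp
        then show False unfolding AW B_bsc1 K2 K6 using bnz om by simp
      qed
    qed
    show "null_line A PQ" unfolding null_line_def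
      by (simp add: pf_add pf_bsc pfA PQ_def pf_wedge B_bsc1 B_bsc2 AW pfW K1[unfolded PQ_def])
    fix a' b' assume "bsc a' A + bsc b' PQ \<noteq> 0"
    then show "\<not> realpt (bsc a' A + bsc b' PQ)" by (rule noreal)
  qed
  define u where "u = co p q t 0 1 0"
  define u' where "u' = co p q (cnj t) 0 1 0"
  have ue: "t *s p + q = u" "cnj t *s p + q = u'" unfolding u_def u'_def co_def by simp_all
  have ju': "jv u' = co p q 0 t 0 1" unfolding u'_def jv_co by simp
  have Wu: "W = wedge u (jv u')" unfolding W_def u_def ju' ..
  have unz: "u \<noteq> 0" using Wnz Wu by (auto simp: wedge_0)
  have ju'nz: "jv u' \<noteq> 0" using Wnz Wu by (auto simp: wedge_0)
  have u'nz: "u' \<noteq> 0" using ju'nz by (auto simp: jv_0)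
  have pqw: "wedge p q = wedge (s *s p + q) ((-1) *s p)" for s
    by (simp add: vec_eq_iff wedge_def algebra_simps)
  have sub1: "hline u \<in> sph A \<inter> sph (wedge p q)"
  proof
    have "A = wedge u (\<beta> *s jv u')" unfolding AW Wu wedge_sc2 ..
    then show "hline u \<in> sph A" unfolding sph_def using unz by blast
    have "wedge p q = wedge u ((-1) *s p)" unfolding pqw[of t] ue ..
    then show "hline u \<in> sph (wedge p q)" unfolding sph_def using unz by blast
  qed
  have sub2: "hline u' \<in> sph A \<inter> sph (wedge p q)"
  proof
    have "A = wedge (jv u') ((-\<beta>) *s u)" unfolding AW Wu wedge_sc2 wedge_anti[of u] bsc_neg by simp
    then show "hline u' \<in> sph A" unfolding sph_def using ju'nz hline_jv[of u'] by blast
    have "wedge p q = wedge u' ((-1) *s p)" unfolding pqw[of "cnj t"] ue ..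
    then show "hline u' \<in> sph (wedge p q)" unfolding sph_def using u'nz by blast
  qed
  have sup: "X \<in> {hline u, hline u'}" if X: "X \<in> sph A \<inter> sph (wedge p q)" for X
  proof -
    obtain v1 w1 where X1: "X = hline v1" "v1 \<noteq> 0" "A = wedge v1 w1" using X unfolding sph_def by blast
    obtain v2 w2 where X2: "X = hline v2" "v2 \<noteq> 0" "wedge p q = wedge v2 w2" using X unfolding sph_def by blast
    obtain x1 x2 x3 x4 where v1: "v1 = co p q x1 x2 x3 x4" using span by blast
    obtain y1 y2 y3 y4 where w1: "w1 = co p q y1 y2 y3 y4" using span by blast
    obtain z1 z2 z3 z4 where v2: "v2 = co p q z1 z2 z3 z4" using span by blast
    obtain r1 r2 r3 r4 where w2: "w2 = co p q r1 r2 r3 r4" using span by blast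
    have "bsc \<beta> (wedge (co p q t 0 1 0) (co p q 0 t 0 1)) = wedge (co p q x1 x2 x3 x4) (co p q y1 y2 y3 y4)"
      using X1(3) A v1 w1 by simp
    note m = minors[OF om this]
    have "bsc 1 (wedge (co p q 1 0 0 0) (co p q 0 0 1 0)) = wedge (co p q z1 z2 z3 z4) (co p q r1 r2 r3 r4)"
      using X2(3) v2 w2 by (simp add: bsc_1 co_simps)
    note n = minors[OF om this]
    have "x1 * \<beta> = t * x3 * \<beta>" using m(2) m(3) m(6) by algebra
    then have x1: "x1 = t * x3" using bnz by simp
    have "x2 * (\<beta> * t) = x4 * (\<beta> * t * t)" using m(1) m(3) m(5) by algebra
    then have x2: "x2 = t * x4" using bnz tnz by simp
    have z2: "z2 = 0" using n(1) n(2) n(4) by algebra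
    have z4: "z4 = 0" using n(2) n(3) n(6) by algebra
    have "v2 \<in> hline v2" unfolding hline_def by (intro CollectI exI[of _ 1] exI[of _ 0]) simp
    then have "v2 \<in> hline v1" using X1(1) X2(1) by simp
    then obtain a0 b0 where "v2 = a0 *s v1 + b0 *s jv v1" unfolding hline_def by blast
    then have "co p q z1 z2 z3 z4 = co p q (a0 * x1 + b0 * (- cnj x2)) (a0 * x2 + b0 * cnj x1)
         (a0 * x3 + b0 * (- cnj x4)) (a0 * x4 + b0 * cnj x3)"
      unfolding v1 v2 jv_co co_sc co_add .
    note ci = co_inj[OF om this]
    have e2: "a0 * (t * x4) + b0 * (cnj t * cnj x3) = 0" using ci z2 x1 x2 by simp
    have e4: "a0 * x4 + b0 * cnj x3 = 0" using ci z4 by simp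
    have "b0 * cnj x3 * (t - cnj t) = 0" using e2 e4 by algebra
    then have "b0 = 0 \<or> x3 = 0" using tc by simp
    then show ?thesis
    proof
      assume x30: "x3 = 0"
      then have x4nz: "x4 \<noteq> 0" using X1(2) v1 x1 x2 co_zero by auto
      have "v1 = x4 *s jv u'" unfolding v1 ju' co_sc x1 x2 x30 by (simp add: mult.commute)
      then have "X = hline u'" using X1(1) hline_sc[OF x4nz] hline_jv by simp
      then show ?thesis by simp
    next
      assume b00: "b0 = 0"
      then have "v2 = a0 *s v1" using \<open>v2 = a0 *s v1 + b0 *s jv v1\<close> by simp
      then have "a0 \<noteq> 0" using X2(2) by auto
      then have x40: "x4 = 0" using e4 b00 by simp
      have x3nz: "x3 \<noteq> 0" using X1(2) v1 x1 x2 x40 co_zero by auto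
      have "v1 = x3 *s u" unfolding v1 u_def co_sc x1 x2 x40 by (simp add: mult.commute)
      then have "X = hline u" using X1(1) hline_sc[OF x3nz] by simp
      then show ?thesis by simp
    qed
  qed
  have "sph A \<inter> sph (wedge p q) = {hline u, hline u'}"
    using sub1 sub2 sup by blast
  then show ?thesis using ht unfolding ue by simp
qed



theorem mainTheorem14:
  fixes p q :: cvec
  assumes "hline p \<inter> hline q = {0}"
    and "\<forall>u. \<exists>a\<in>hline p. \<exists>b\<in>hline q. u = a + b"
    and "A = bsc a (wedge p (jv p)) + bsc b (wedge q (jv q))
             + bsc c (wedge (p + q) (jv (p + q)))"
    and "inQ A"
  shows "(\<exists>v d. v \<noteq> 0 \<and> A = bsc d (wedge v (jv v)) \<and>
            (hline v = hline p \<or> (\<exists>x::real. hline v = hline (complex_of_real x *s p + q))))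
       \<or> (half_touch A (wedge p q) \<and>
          (\<exists>z. Im z \<noteq> 0 \<and>
             sph A \<inter> sph (wedge p q) = {hline (z *s p + q), hline (cnj z *s p + q)}))"
proof -
  have span: "\<exists>x1 x2 x3 x4. u = co p q x1 x2 x3 x4" for u
  proof -
    obtain a' b' where "a' \<in> hline p" "b' \<in> hline q" "u = a' + b'" using assms(2) by blast
    then obtain a1 a2 b1 b2 where "u = (a1 *s p + a2 *s jv p) + (b1 *s q + b2 *s jv q)"
      unfolding hline_def by blast
    then show ?thesis unfolding co_def by (metis add.assoc)
  qed
  have om: "om p q \<noteq> 0" using om_nz span by blast
  have Anz: "A \<noteq> 0" and pfA: "pf A = 0" using assms(4) unfolding inQ_def by auto
  have e1: "p + q = co p q 1 0 1 0" "jv (p + q) = co p q 0 1 0 1" "p = co p q 1 0 0 0" "jv p = co p q 0 1 0 0"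
     "q = co p q 0 0 1 0" "jv q = co p q 0 0 0 1"
    by (simp_all add: co_def jv_add)
  have d1: "D p (jv p) q (jv q) = om p q" by (simp add: om_def)
  have d2: "D p (jv p) (p+q) (jv (p+q)) = om p q"
    using D_co[of p q 1 0 0 0 0 1 0 0 1 0 1 0 0 1 0 1] by (simp add: co_simps e1(1,2)[symmetric] det4_def)
  have d3: "D q (jv q) (p+q) (jv (p+q)) = om p q"
    using D_co[of p q 0 0 1 0 0 0 0 1 1 0 1 0 0 1 0 1] by (simp add: co_simps e1(1,2)[symmetric] det4_def)
  have "pf A = (a*b + a*c + b*c) * om p q"
    unfolding assms(3) pf3 pf_wedge D_def[symmetric] d1 d2 d3 by (simp add: algebra_simps)
  then have abc: "a*b + a*c + b*c = 0" using pfA om by simp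
  have Aexp: "A = bsc (a+c) (wedge p (jv p)) + bsc (b+c) (wedge q (jv q)) + bsc c (wedge p (jv q) + wedge q (jv p))"
    unfolding assms(3) jv_add wedge_11 by (simp add: vec_eq_iff bsc_def algebra_simps)
  show ?thesis
  proof (cases "c = 0")
    case True
    then have "a = 0 \<or> b = 0" using abc by simp
    then show ?thesis
    proof
      assume a0: "a = 0"
      have "q \<noteq> 0" using co_inj[OF om, of 0 0 1 0 0 0 0 0] e1(5) by (auto simp: co_def)
      moreover have "A = bsc b (wedge q (jv q))" using Aexp a0 True by (simp add: bsc_0)
      moreover have "hline q = hline (complex_of_real 0 *s p + q)" by simp
      ultimately show ?thesis by blast
    next
      assume b0: "b = 0"
      have "p \<noteq> 0" using co_inj[OF om, of 1 0 0 0 0 0 0 0] e1(3) by (auto simp: co_def)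
      moreover have "A = bsc a (wedge p (jv p))" using Aexp b0 True by (simp add: bsc_0)
      ultimately show ?thesis by blast
    qed
  next
    case False
    define t where "t = (a+c)/c"
    have bt: "(b+c) * t = c" using abc False unfolding t_def by (simp add: field_simps)
    have ct: "c * t = a + c" using False unfolding t_def by simp
    have btt: "(b+c) * (t*t) = a + c" using bt ct by (metis mult.assoc)
    have Aw: "A = bsc (b+c) (wedge (co p q t 0 1 0) (co p q 0 t 0 1))"
    proof -
      have cos: "co p q t 0 1 0 = t *s p + q" "co p q 0 t 0 1 = t *s jv p + jv q" by (simp_all add: co_def)
      have "bsc (b+c) (wedge (co p q t 0 1 0) (co p q 0 t 0 1)) =
        bsc (a+c) (wedge p (jv p)) + bsc c (wedge p (jv q)) + bsc c (wedge q (jv p)) + bsc (b+c) (wedge q (jv q))"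
        unfolding cos wedge_tt bsc_add bsc_bsc bt btt by simp
      then show ?thesis unfolding Aexp by (simp add: vec_eq_iff bsc_def algebra_simps)
    qed
    show ?thesis
    proof (cases "Im t = 0")
      case True
      define v where "v = complex_of_real (Re t) *s p + q"
      have tr: "t = complex_of_real (Re t)" using True by (simp add: complex_eq_iff)
      have "co p q t 0 1 0 = v" "co p q 0 t 0 1 = jv v" unfolding v_def co_def
        using tr \<open>Im t = 0\<close> by (auto simp: jv_add jv_sc complex_eq_iff)
      then have Av: "A = bsc (b+c) (wedge v (jv v))" using Aw by simp
      have "v \<noteq> 0" using Av Anz by (auto simp: wedge_0 bsc_0)
      then show ?thesis using Av unfolding v_def by blast
    next
      case False
      then show ?thesis using case_nonreal[OF om span Aw Anz False] by blast
    qed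
  qed
qed


end
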